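(* Let $n\ge 3$ and $1\le i\le n-2$ be integers, and let $\mathcal{A}=\{A_1,\dots,A_n\}$ with $A_1=\dots=A_i=[n]$, $A_{i+1}=\dots=A_{n-1}=[n]\setminus[i]$, $A_n=[n]$. Let $$A=\{\log(x_{j_1}x_{j_2}\cdots x_{j_n}) \mid j_k\in A_k \text{ for all } 1\le k\le n\}\subset\mathbb{N}^n$$ be the exponent set of the monomial generators of $K[\mathcal{A}]$. Then the cone $\mathbb{R}_+A$ has dimension $n$ and has the irreducible representation $$\mathbb{R}_+A=\bigcap_{a\in N}H_a^+,\qquad N=\{\nu_{[i]}\}\cup\{e_1,\dots,e_n\},$$ where $\nu_{[i]}=(-(n-i-1),\dots,-(n-i-1),\,i+1,\dots,i+1)\in\mathbb{Z}^n$ has its first $i$ entries equal to $-(n-i-1)$ and its last $n-i$ entries equal to $i+1$. Equivalently, $\mathbb{R}_+A=\{x\in\mathbb{R}^n \mid x_k\ge 0 \text{ for all } k,\ -(n-i-1)\sum_{k=1}^i x_k+(i+1)\sum_{k=i+1}^n x_k\ge 0\}$, and none of these $n+1$ half-spaces can be omitted. *)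

theory Defs
  imports "HOL-Analysis.Analysis"
begin

text \<open>Vectors of R^n are modelled as functions nat => real supported on the
index set {1..n}.\<close>

definition ambient :: "nat \<Rightarrow> (nat \<Rightarrow> real) set" where
  "ambient n = {x. \<forall>k. k \<notin> {1..n} \<longrightarrow> x k = 0}"

definition pos_cone :: "(nat \<Rightarrow> real) set \<Rightarrow> (nat \<Rightarrow> real) set" where
  "pos_cone S = {x. \<exists>F c. finite F \<and> F \<subseteq> S \<and> (\<forall>a\<in>F. c a \<ge> 0) \<and>
                        x = (\<lambda>k. \<Sum>a\<in>F. c a * a k)}"

definition lin_indep :: "(nat \<Rightarrow> real) set \<Rightarrow> bool" where
  "lin_indep B \<longleftrightarrow> (\<forall>c. (\<forall>k. (\<Sum>b\<in>B. c b * b k) = 0) \<longrightarrow> (\<forall>b\<in>B. c b = 0))"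

definition vdim :: "(nat \<Rightarrow> real) set \<Rightarrow> nat" where
  "vdim C = Sup {card B | B. finite B \<and> B \<subseteq> C \<and> lin_indep B}"

definition halfspace :: "nat \<Rightarrow> (nat \<Rightarrow> real) \<Rightarrow> (nat \<Rightarrow> real) set" where
  "halfspace n a = {x \<in> ambient n. (\<Sum>k=1..n. a k * x k) \<ge> 0}"

definition Aset :: "nat \<Rightarrow> nat \<Rightarrow> nat \<Rightarrow> nat set" where
  "Aset n i k = (if k \<le> i \<or> k = n then {1..n} else {i+1..n})"

definition expvec :: "nat \<Rightarrow> (nat \<Rightarrow> nat) \<Rightarrow> (nat \<Rightarrow> real)" where
  "expvec n j = (\<lambda>m. real (card {k\<in>{1..n}. j k = m}))"

definition expset :: "nat \<Rightarrow> nat \<Rightarrow> (nat \<Rightarrow> real) set" where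
  "expset n i = {expvec n j | j. \<forall>k\<in>{1..n}. j k \<in> Aset n i k}"

definition unitvec :: "nat \<Rightarrow> (nat \<Rightarrow> real)" where
  "unitvec k = (\<lambda>m. if m = k then 1 else 0)"

definition nu :: "nat \<Rightarrow> nat \<Rightarrow> (nat \<Rightarrow> real)" where
  "nu n i = (\<lambda>k. if 1 \<le> k \<and> k \<le> i then - (real n - real i - 1)
                 else if i < k \<and> k \<le> n then real i + 1 else 0)"

definition normals :: "nat \<Rightarrow> nat \<Rightarrow> (nat \<Rightarrow> real) set" where
  "normals n i = insert (nu n i) (unitvec ` {1..n})"

end

theory Submission
  imports Defs "HOL-Library.Function_Algebras"
begin

lemma pc_add:
  assumes "x \<in> pos_cone S" "y \<in> pos_cone S"
  shows "(\<lambda>k. x k + y k) \<in> pos_cone S"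
proof -
  obtain F1 c1 where 1: "finite F1" "F1 \<subseteq> S" "\<forall>a\<in>F1. c1 a \<ge> 0" "x = (\<lambda>k. \<Sum>a\<in>F1. c1 a * a k)"
    using assms(1) unfolding pos_cone_def by blast
  obtain F2 c2 where 2: "finite F2" "F2 \<subseteq> S" "\<forall>a\<in>F2. c2 a \<ge> 0" "y = (\<lambda>k. \<Sum>a\<in>F2. c2 a * a k)"
    using assms(2) unfolding pos_cone_def by blast
  define c where "c a = (if a \<in> F1 then c1 a else 0) + (if a \<in> F2 then c2 a else 0)" for a
  have eq: "(\<lambda>k. x k + y k) = (\<lambda>k. \<Sum>a\<in>F1\<union>F2. c a * a k)"
  proof
    fix k
    have e1: "c a * a k = (if a \<in> F1 then c1 a * a k else 0) + (if a \<in> F2 then c2 a * a k else 0)" for a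
      by (simp add: c_def distrib_right)
    have s1: "(\<Sum>a\<in>F1\<union>F2. (if a \<in> F1 then c1 a * a k else 0)) = (\<Sum>a\<in>F1. c1 a * a k)"
      by (rule sum.mono_neutral_cong_right) (use 1(1) 2(1) in auto)
    have s2: "(\<Sum>a\<in>F1\<union>F2. (if a \<in> F2 then c2 a * a k else 0)) = (\<Sum>a\<in>F2. c2 a * a k)"
      by (rule sum.mono_neutral_cong_right) (use 1(1) 2(1) in auto)
    show "x k + y k = (\<Sum>a\<in>F1\<union>F2. c a * a k)"
      unfolding e1 sum.distrib s1 s2 1(4) 2(4) by (rule refl)
  qed
  have nn: "\<forall>a\<in>F1\<union>F2. c a \<ge> 0" using 1(3) 2(3) by (auto simp: c_def)
  show ?thesis unfolding pos_cone_def
    apply (rule CollectI)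
    apply (rule exI[of _ "F1\<union>F2"], rule exI[of _ c])
    using 1(1,2) 2(1,2) nn eq by blast
qed

lemma pc_scale:
  assumes "x \<in> pos_cone S" "t \<ge> 0"
  shows "(\<lambda>k. t * x k) \<in> pos_cone S"
proof -
  obtain F c where 1: "finite F" "F \<subseteq> S" "\<forall>a\<in>F. c a \<ge> 0" "x = (\<lambda>k. \<Sum>a\<in>F. c a * a k)"
    using assms(1) unfolding pos_cone_def by blast
  have "(\<lambda>k. t * x k) = (\<lambda>k. \<Sum>a\<in>F. (t * c a) * a k)"
    using 1(4) by (simp add: sum_distrib_left mult.assoc)
  moreover have "\<forall>a\<in>F. t * c a \<ge> 0" using 1(3) assms(2) by simp
  ultimately show ?thesis unfolding pos_cone_def
    apply (intro CollectI exI[of _ F] exI[of _ "\<lambda>a. t * c a"])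
    using 1(1,2) by blast
qed

lemma pc_base: "a \<in> S \<Longrightarrow> a \<in> pos_cone S"
  unfolding pos_cone_def
  by (rule CollectI, rule exI[of _ "{a}"], rule exI[of _ "\<lambda>_. 1"]) auto

lemma pc_zero: "(\<lambda>k. 0) \<in> pos_cone S"
  unfolding pos_cone_def by (rule CollectI, rule exI[of _ "{}"]) auto

lemma pc_sum:
  assumes "finite J" "\<forall>j\<in>J. f j \<in> pos_cone S"
  shows "(\<lambda>k. \<Sum>j\<in>J. f j k) \<in> pos_cone S"
  using assms
proof (induction J rule: finite_induct)
  case empty then show ?case using pc_zero by simp
next
  case (insert j J)
  then show ?case using pc_add[of "f j" S "\<lambda>k. \<Sum>j\<in>J. f j k"] by simp
qed

lemma pc_halfspace:
  assumes "S \<subseteq> halfspace n w"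
  shows "pos_cone S \<subseteq> halfspace n w"
proof
  fix x assume "x \<in> pos_cone S"
  then obtain F c where 1: "finite F" "F \<subseteq> S" "\<forall>a\<in>F. c a \<ge> 0" "x = (\<lambda>k. \<Sum>a\<in>F. c a * a k)"
    unfolding pos_cone_def by blast
  have amb: "x \<in> ambient n"
    using 1 assms unfolding ambient_def halfspace_def by (auto intro!: sum.neutral)
  have "(\<Sum>k=1..n. w k * x k) = (\<Sum>a\<in>F. c a * (\<Sum>k=1..n. w k * a k))"
    unfolding 1(4) sum_distrib_left by (subst sum.swap) (simp add: mult_ac)
  also have "\<dots> \<ge> 0"
    using 1 assms unfolding halfspace_def by (auto intro!: sum_nonneg)
  finally show "x \<in> halfspace n w" using amb unfolding halfspace_def by simp
qed

lemma card_real_sum: "finite A \<Longrightarrow> real (card {k\<in>A. P k}) = (\<Sum>k\<in>A. if P k then 1 else 0)"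
  by (simp add: sum.inter_filter[symmetric])

lemma dot_expvec:
  assumes "\<forall>k\<in>{1..n}. j k \<in> {1..n}"
  shows "(\<Sum>m=1..n. w m * expvec n j m) = (\<Sum>k=1..n. w (j k))"
proof -
  have "(\<Sum>m=1..n. w m * expvec n j m) = (\<Sum>m=1..n. \<Sum>k=1..n. if j k = m then w m else 0)"
  proof (intro sum.cong refl)
    fix m
    have "expvec n j m = (\<Sum>k=1..n. if j k = m then 1 else 0)"
      unfolding expvec_def by (rule card_real_sum) simp
    then show "w m * expvec n j m = (\<Sum>k=1..n. if j k = m then w m else 0)"
      by (simp add: sum_distrib_left if_distrib cong: if_cong)
  qed
  also have "\<dots> = (\<Sum>k=1..n. \<Sum>m=1..n. if j k = m then w m else 0)"
    by (rule sum.swap)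
  also have "\<dots> = (\<Sum>k=1..n. w (j k))"
    using assms by (intro sum.cong) (auto simp: sum.delta)
  finally show ?thesis .
qed

lemma Aset_sub: "Aset n i k \<subseteq> {1..n}"
  unfolding Aset_def by auto

lemma expset_ambient: "expset n i \<subseteq> ambient n"
proof
  fix x assume "x \<in> expset n i"
  then obtain j where x: "x = expvec n j" and j: "\<forall>k\<in>{1..n}. j k \<in> Aset n i k"
    unfolding expset_def by blast
  have "x m = 0" if "m \<notin> {1..n}" for m
  proof -
    have "{k\<in>{1..n}. j k = m} = {}" using j that Aset_sub by blast
    then show ?thesis unfolding x expvec_def by simp
  qed
  then show "x \<in> ambient n" unfolding ambient_def by blast
qed

lemma expset_unit: "expset n i \<subseteq> halfspace n (unitvec k)"
proof
  fix x assume xe: "x \<in> expset n i"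
  then obtain j where x: "x = expvec n j"
    unfolding expset_def by blast
  have "(\<Sum>m=1..n. unitvec k m * x m) \<ge> 0"
    unfolding x expvec_def unitvec_def by (intro sum_nonneg) auto
  then show "x \<in> halfspace n (unitvec k)" using xe expset_ambient unfolding halfspace_def by blast
qed

lemma expset_nu:
  assumes "i < n"
  shows "expset n i \<subseteq> halfspace n (nu n i)"
proof
  fix x assume xe: "x \<in> expset n i"
  then obtain j where x: "x = expvec n j" and j: "\<forall>k\<in>{1..n}. j k \<in> Aset n i k"
    unfolding expset_def by blast
  have j1: "\<forall>k\<in>{1..n}. j k \<in> {1..n}" using j Aset_sub by blast
  define P where "P = {k\<in>{1..n}. k \<le> i \<or> k = n}"
  define Q where "Q = {k\<in>{1..n}. \<not> (k \<le> i \<or> k = n)}"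
  have PQ: "{1..n} = P \<union> Q" "P \<inter> Q = {}" unfolding P_def Q_def by auto
  have Pe: "P = insert n {1..i}" using assms unfolding P_def by auto
  have Qe: "Q = {i+1..<n}" using assms unfolding Q_def by auto
  have cP: "card P = i + 1" using assms unfolding Pe by simp
  have cQ: "card Q = n - i - 1" unfolding Qe by simp
  have "(\<Sum>k\<in>Q. nu n i (j k)) = (\<Sum>k\<in>Q. real i + 1)"
  proof (intro sum.cong refl)
    fix k assume "k \<in> Q"
    then have k1: "k \<in> {1..n}" "\<not> (k \<le> i \<or> k = n)" unfolding Q_def by auto
    have "j k \<in> Aset n i k" using j k1 by blast
    then have "j k \<in> {i+1..n}" using k1 unfolding Aset_def by simp
    then show "nu n i (j k) = real i + 1" unfolding nu_def by auto
  qed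
  also have "\<dots> = real (n - i - 1) * (real i + 1)" using cQ by simp
  finally have sQ: "(\<Sum>k\<in>Q. nu n i (j k)) = real (n - i - 1) * (real i + 1)" .
  have "(\<Sum>k\<in>P. - (real n - real i - 1)) \<le> (\<Sum>k\<in>P. nu n i (j k))"
  proof (intro sum_mono)
    fix k assume "k \<in> P"
    then have "j k \<in> {1..n}" using j1 unfolding P_def by auto
    then show "- (real n - real i - 1) \<le> nu n i (j k)" using assms unfolding nu_def by auto
  qed
  then have sP: "(\<Sum>k\<in>P. nu n i (j k)) \<ge> - (real n - real i - 1) * (real i + 1)"
    using cP by (simp add: mult.commute add.commute)
  have "(\<Sum>m=1..n. nu n i m * x m) = (\<Sum>k=1..n. nu n i (j k))"
    unfolding x by (rule dot_expvec[OF j1])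
  also have "\<dots> = (\<Sum>k\<in>P. nu n i (j k)) + (\<Sum>k\<in>Q. nu n i (j k))"
    unfolding PQ(1) by (rule sum.union_disjoint) (auto simp: P_def Q_def)
  finally have tot: "(\<Sum>m=1..n. nu n i m * x m) = (\<Sum>k\<in>P. nu n i (j k)) + (\<Sum>k\<in>Q. nu n i (j k))" .
  have "(\<Sum>m=1..n. nu n i m * x m) \<ge> 0"
  proof -
    have r: "real (n - i - 1) = real n - real i - 1" using assms by (simp add: of_nat_diff)
    have "- (real n - real i - 1) * (real i + 1) + (real n - real i - 1) * (real i + 1) = 0"
      by (simp add: algebra_simps)
    then show ?thesis using sP sQ[unfolded r] tot by linarith
  qed
  then show "x \<in> halfspace n (nu n i)" using xe expset_ambient unfolding halfspace_def by blast
qed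

lemma gen1:
  assumes "i < b" "b \<le> n"
  shows "(\<lambda>m. real n * unitvec b m) \<in> expset n i"
proof -
  have "expvec n (\<lambda>_. b) = (\<lambda>m. real n * unitvec b m)"
  proof
    fix m
    show "expvec n (\<lambda>_. b) m = real n * unitvec b m"
    proof (cases "m = b")
      case True
      then have "{k\<in>{1..n}. b = m} = {1..n}" by auto
      then show ?thesis using True unfolding expvec_def unitvec_def by simp
    next
      case False
      then have "{k\<in>{1..n}. b = m} = {}" by auto
      then show ?thesis using False unfolding expvec_def unitvec_def by simp
    qed
  qed
  moreover have "\<forall>k\<in>{1..n}. b \<in> Aset n i k" using assms unfolding Aset_def by auto
  ultimately show ?thesis unfolding expset_def by (intro CollectI exI[of _ "\<lambda>_. b"]) simp
qed

lemma gen2: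
  assumes "1 \<le> a" "a \<le> i" "i < b" "b \<le> n"
  shows "(\<lambda>m. if m = a then real i + 1 else if m = b then real n - real i - 1 else 0) \<in> expset n i"
proof -
  define j where "j k = (if k \<le> i \<or> k = n then a else b)" for k
  have ab: "a \<noteq> b" using assms by simp
  have "expvec n j m = (if m = a then real i + 1 else if m = b then real n - real i - 1 else 0)" for m
  proof -
    consider "m = a" | "m = b" | "m \<noteq> a" "m \<noteq> b" by blast
    then show ?thesis
    proof cases
      case 1
      have "{k\<in>{1..n}. j k = m} = insert n {1..i}" using 1 ab assms unfolding j_def by auto
      then show ?thesis using 1 assms unfolding expvec_def by simp
    next
      case 2
      have "{k\<in>{1..n}. j k = m} = {i+1..<n}" using 2 ab assms unfolding j_def by auto
      then show ?thesis using 2 ab assms unfolding expvec_def by (simp add: of_nat_diff)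
    next
      case 3
      have "{k\<in>{1..n}. j k = m} = {}" using 3 unfolding j_def by auto
      then show ?thesis using 3 unfolding expvec_def by simp
    qed
  qed
  then have "expvec n j = (\<lambda>m. if m = a then real i + 1 else if m = b then real n - real i - 1 else 0)"
    by blast
  moreover have "\<forall>k\<in>{1..n}. j k \<in> Aset n i k" using assms unfolding Aset_def j_def by auto
  ultimately show ?thesis unfolding expset_def by (intro CollectI exI[of _ j]) simp
qed

lemma unit_in_cone:
  assumes "i < b" "b \<le> n"
  shows "unitvec b \<in> pos_cone (expset n i)"
proof -
  have "(\<lambda>k. (1 / real n) * (real n * unitvec b k)) \<in> pos_cone (expset n i)"
    by (rule pc_scale[OF pc_base[OF gen1[OF assms]]]) simp
  moreover have "(\<lambda>k. (1 / real n) * (real n * unitvec b k)) = unitvec b"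
    using assms by auto
  ultimately show ?thesis by simp
qed

lemma rev_incl:
  assumes i1: "1 \<le> i" and i2: "i + 2 \<le> n"
    and amb: "x \<in> ambient n" and pos: "\<forall>k\<in>{1..n}. x k \<ge> 0"
    and nuin: "(\<Sum>k=1..n. nu n i k * x k) \<ge> 0"
  shows "x \<in> pos_cone (expset n i)"
proof -
  define \<alpha> where "\<alpha> = real n - real i - 1"
  define \<beta> where "\<beta> = real i + 1"
  define S where "S = (\<Sum>a=1..i. x a)"
  define T where "T = (\<Sum>b=i+1..n. x b)"
  have al: "\<alpha> \<ge> 1" using i2 unfolding \<alpha>_def by simp
  have be: "\<beta> > 0" unfolding \<beta>_def by simp
  have S0: "S \<ge> 0" unfolding S_def using pos i2 by (intro sum_nonneg) auto
  have T0: "T \<ge> 0" unfolding T_def using pos by (intro sum_nonneg) auto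
  have split: "{1..n} = {1..i} \<union> {i+1..n}" using i2 by auto
  have "(\<Sum>k=1..n. nu n i k * x k) = (\<Sum>k=1..i. nu n i k * x k) + (\<Sum>k=i+1..n. nu n i k * x k)"
    unfolding split by (rule sum.union_disjoint) auto
  also have "(\<Sum>k=1..i. nu n i k * x k) = (\<Sum>k=1..i. - \<alpha> * x k)"
    unfolding nu_def \<alpha>_def by (intro sum.cong) auto
  also have "(\<Sum>k=i+1..n. nu n i k * x k) = (\<Sum>k=i+1..n. \<beta> * x k)"
    unfolding nu_def \<beta>_def by (intro sum.cong) auto
  finally have ineq: "\<alpha> * S \<le> \<beta> * T" using nuin unfolding S_def T_def
    by (simp add: sum_distrib_left sum_negf)
  have xa0: "x a = 0" if "T = 0" "a \<in> {1..i}" for a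
  proof -
    have "\<alpha> * S \<le> 0" using ineq that by simp
    then have "S \<le> 0" using al by (simp add: mult_le_0_iff)
    then have "S = 0" using S0 by simp
    then show ?thesis using that(2) pos i2 unfolding S_def
      by (subst (asm) sum_nonneg_eq_0_iff) auto
  qed
  define q where "q = \<alpha> * S / (\<beta> * T)"
  have q1: "q \<le> 1"
  proof (cases "T = 0")
    case True then show ?thesis unfolding q_def by simp
  next
    case False
    then have "\<beta> * T > 0" using be T0 by simp
    then show ?thesis unfolding q_def using ineq by simp
  qed
  define lam where "lam (a::nat) (b::nat) = x a * x b / (\<beta> * T)" for a b
  define mu where "mu (b::nat) = x b * (1 - q)" for b
  define h where "h (a::nat) (b::nat) = (\<lambda>m. if m = a then real i + 1 else if m = b then real n - real i - 1 else (0::real))" for a b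
  define R where "R = (\<lambda>k. (\<Sum>a=1..i. \<Sum>b=i+1..n. lam a b * h a b k) + (\<Sum>b=i+1..n. mu b * unitvec b k))"
  have Rin: "R \<in> pos_cone (expset n i)"
    unfolding R_def
  proof (rule pc_add)
    show "(\<lambda>k. \<Sum>a = 1..i. \<Sum>b = i + 1..n. lam a b * h a b k) \<in> pos_cone (expset n i)"
    proof (rule pc_sum, simp, intro ballI)
      fix a assume a: "a \<in> {1..i}"
      show "(\<lambda>k. \<Sum>b = i + 1..n. lam a b * h a b k) \<in> pos_cone (expset n i)"
      proof (rule pc_sum, simp, intro ballI)
        fix b assume b: "b \<in> {i+1..n}"
        have "h a b \<in> pos_cone (expset n i)" unfolding h_def
          by (rule pc_base, rule gen2) (use a b in auto)
        moreover have "lam a b \<ge> 0" unfolding lam_def using pos a b i2 be T0 by auto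
        ultimately show "(\<lambda>k. lam a b * h a b k) \<in> pos_cone (expset n i)" by (rule pc_scale)
      qed
    qed
    show "(\<lambda>k. \<Sum>b = i + 1..n. mu b * unitvec b k) \<in> pos_cone (expset n i)"
    proof (rule pc_sum, simp, intro ballI)
      fix b assume b: "b \<in> {i+1..n}"
      have "mu b \<ge> 0" unfolding mu_def using pos b q1 i2 by auto
      then show "(\<lambda>k. mu b * unitvec b k) \<in> pos_cone (expset n i)"
        using pc_scale[OF unit_in_cone[of i b n]] b by auto
    qed
  qed
  have "x = R"
  proof
    fix k
    consider "k \<in> {1..i}" | "k \<in> {i+1..n}" | "k \<notin> {1..n}" using i2 by force
    then show "x k = R k"
    proof cases
      case 1
      have "R k = (\<Sum>a=1..i. if a = k then (\<Sum>b=i+1..n. lam k b * \<beta>) else 0)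
                  + (\<Sum>b=i+1..n. mu b * 0)"
        unfolding R_def using 1
        by (intro arg_cong2[where f="(+)"] sum.cong refl) (auto simp: h_def unitvec_def \<beta>_def)
      also have "\<dots> = (\<Sum>b=i+1..n. lam k b * \<beta>)" using 1 by simp
      also have "\<dots> = (\<Sum>b=i+1..n. x k * x b / T)" unfolding lam_def
        using be by (intro sum.cong refl) simp
      also have "\<dots> = x k * T / T" unfolding T_def
        by (simp add: sum_distrib_left sum_divide_distrib)
      also have "\<dots> = x k"
        using xa0[OF _ 1] by (cases "T = 0") auto
      finally show ?thesis by simp
    next
      case 2
      have in1: "(\<Sum>b=i+1..n. lam a b * h a b k) = lam a k * \<alpha>" if a: "a \<in> {1..i}" for a
      proof -
        have "(\<Sum>b=i+1..n. lam a b * h a b k) = (\<Sum>b=i+1..n. if k = b then lam a k * \<alpha> else 0)"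
          using a 2 by (intro sum.cong refl) (auto simp: h_def \<alpha>_def)
        also have "\<dots> = lam a k * \<alpha>" using 2 by (simp add: sum.delta')
        finally show ?thesis .
      qed
      have in2: "(\<Sum>b=i+1..n. mu b * unitvec b k) = mu k"
      proof -
        have "(\<Sum>b=i+1..n. mu b * unitvec b k) = (\<Sum>b=i+1..n. if k = b then mu k else 0)"
          by (intro sum.cong refl) (auto simp: unitvec_def)
        also have "\<dots> = mu k" using 2 by (simp add: sum.delta')
        finally show ?thesis .
      qed
      have "R k = (\<Sum>a=1..i. lam a k * \<alpha>) + mu k"
        unfolding R_def in2 using in1 by simp
      also have "(\<Sum>a=1..i. lam a k * \<alpha>) = (\<Sum>a=1..i. x a * (x k * \<alpha> / (\<beta> * T)))"
        unfolding lam_def by (intro sum.cong refl) simp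
      also have "\<dots> = S * (x k * \<alpha> / (\<beta> * T))"
        unfolding S_def by (rule sum_distrib_right[symmetric])
      also have "\<dots> = x k * q" unfolding q_def by simp
      finally show ?thesis unfolding mu_def by (simp add: algebra_simps)
    next
      case 3
      have "x k = 0" using amb 3 unfolding ambient_def by blast
      moreover have "R k = 0" unfolding R_def h_def unitvec_def using 3 i2
        by (auto intro!: sum.neutral)
      ultimately show ?thesis by simp
    qed
  qed
  then show ?thesis using Rin by simp
qed

definition sc :: "real \<Rightarrow> (nat \<Rightarrow> real) \<Rightarrow> (nat \<Rightarrow> real)" where
  "sc c f = (\<lambda>k. c * f k)"

interpretation fv: vector_space sc
  by unfold_locales (auto simp: sc_def fun_eq_iff algebra_simps)

lemma sum_apply_fun: "(\<Sum>x\<in>A. f x) (k::nat) = (\<Sum>x\<in>A. f x k)" for f :: "'a \<Rightarrow> nat \<Rightarrow> real"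
proof (cases "finite A")
  case True then show ?thesis by (induction A rule: finite_induct) auto
next
  case False then show ?thesis by simp
qed

lemma indep_card:
  assumes "finite B" "B \<subseteq> ambient n" "lin_indep B"
  shows "card B \<le> n"
proof -
  have ind: "fv.independent B"
  proof (rule fv.independent_if_scalars_zero[OF assms(1)])
    fix f x assume s: "(\<Sum>x\<in>B. sc (f x) x) = 0" and x: "x \<in> B"
    have "\<forall>k. (\<Sum>b\<in>B. f b * b k) = 0"
    proof
      fix k
      have "(\<Sum>x\<in>B. sc (f x) x) k = 0" using s by simp
      then show "(\<Sum>b\<in>B. f b * b k) = 0" by (simp add: sum_apply_fun sc_def)
    qed
    then show "f x = 0" using assms(3) x unfolding lin_indep_def by blast
  qed
  have sp: "B \<subseteq> fv.span (unitvec ` {1..n})"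
  proof
    fix x assume "x \<in> B"
    then have xa: "x \<in> ambient n" using assms(2) by blast
    have "x = (\<Sum>k\<in>{1..n}. sc (x k) (unitvec k))"
    proof
      fix m
      have "(\<Sum>k\<in>{1..n}. sc (x k) (unitvec k)) m = (\<Sum>k\<in>{1..n}. if m = k then x m else 0)"
        unfolding sum_apply_fun sc_def unitvec_def by (intro sum.cong refl) auto
      also have "\<dots> = x m" using xa unfolding ambient_def by (simp add: sum.delta)
      finally show "x m = (\<Sum>k\<in>{1..n}. sc (x k) (unitvec k)) m" by simp
    qed
    also have "\<dots> \<in> fv.span (unitvec ` {1..n})"
      by (intro fv.span_sum fv.span_scale fv.span_base) auto
    finally show "x \<in> fv.span (unitvec ` {1..n})" .
  qed
  have "card B \<le> card (unitvec ` {1..n})"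
    using fv.independent_span_bound[OF _ ind sp] by simp
  also have "\<dots> \<le> n" using card_image_le[of "{1..n}" unitvec] by simp
  finally show ?thesis .
qed

lemma cone_ambient: "pos_cone (expset n i) \<subseteq> ambient n"
  using pc_halfspace[OF expset_unit[of n i 1]] unfolding halfspace_def by blast

lemma lower_B:
  assumes i1: "1 \<le> i" and i2: "i + 2 \<le> n"
  shows "\<exists>B. finite B \<and> B \<subseteq> pos_cone (expset n i) \<and> lin_indep B \<and> card B = n"
proof -
  define hh where "hh m = (\<lambda>k. if k = m then real i + 1 else if k = n then real n - real i - 1 else (0::real))" for m :: nat
  define v where "v m = (if m \<le> i then hh m else unitvec m)" for m
  have vin: "v m \<in> pos_cone (expset n i)" if "m \<in> {1..n}" for m
  proof (cases "m \<le> i")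
    case True
    then show ?thesis unfolding v_def hh_def using that i2
      by (simp, intro pc_base gen2) auto
  next
    case False
    then show ?thesis unfolding v_def using that by (simp add: unit_in_cone)
  qed
  have vpp: "v p p = real i + 1" if "p \<le> i" for p
    using that unfolding v_def hh_def by simp
  have vqp: "v q p = 0" if "p \<in> {1..i}" "q \<in> {1..n}" "q \<noteq> p" for p q
    using that i2 unfolding v_def hh_def unitvec_def by auto
  have vuu: "v p = unitvec p" if "\<not> p \<le> i" for p using that unfolding v_def by simp
  have inj: "inj_on v {1..n}"
  proof (rule inj_onI, rule ccontr)
    fix p q assume p: "p \<in> {1..n}" and q: "q \<in> {1..n}" and e: "v p = v q" and ne: "p \<noteq> q"
    show False
    proof (cases "p \<le> i")
      case True
      then have "v p p = real i + 1" by (rule vpp)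
      moreover have "v q p = 0" using vqp[of p q] True p q ne by auto
      ultimately show False using e by simp
    next
      case pF: False
      show False
      proof (cases "q \<le> i")
        case True
        then have "v q q = real i + 1" by (rule vpp)
        moreover have "v p q = 0" using vqp[of q p] True p q ne by auto
        ultimately show False using e by simp
      next
        case False
        then have "v q p = 0" using vuu[OF False] ne unfolding unitvec_def by simp
        moreover have "v p p = 1" using vuu[OF pF] unfolding unitvec_def by simp
        ultimately show False using e by simp
      qed
    qed
  qed
  have li: "lin_indep (v ` {1..n})"
    unfolding lin_indep_def
  proof (intro allI impI)
    fix c :: "(nat \<Rightarrow> real) \<Rightarrow> real"
    assume H: "\<forall>k. (\<Sum>b\<in>v ` {1..n}. c b * b k) = 0"
    have H2: "(\<Sum>m\<in>{1..n}. c (v m) * v m k) = 0" for k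
      using H sum.reindex[OF inj, of "\<lambda>b. c b * b k"] by simp
    have z1: "c (v p) = 0" if p: "p \<in> {1..i}" for p
    proof -
      have "(\<Sum>m\<in>{1..n}. c (v m) * v m p) = (\<Sum>m\<in>{1..n}. if m = p then c (v p) * (real i + 1) else 0)"
        using p vpp vqp by (intro sum.cong refl) auto
      also have "\<dots> = c (v p) * (real i + 1)" using p i2 by (simp add: sum.delta)
      finally show ?thesis using H2[of p] by (simp add: add_nonneg_eq_0_iff)
    qed
    have z2: "c (v p) = 0" if p: "p \<in> {i+1..n}" for p
    proof -
      have "(\<Sum>m\<in>{1..n}. c (v m) * v m p) = (\<Sum>m\<in>{1..n}. if m = p then c (v p) else 0)"
      proof (intro sum.cong refl)
        fix m assume m: "m \<in> {1..n}"
        show "c (v m) * v m p = (if m = p then c (v p) else 0)"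
        proof (cases "m \<le> i")
          case True then show ?thesis using z1[of m] m p by auto
        next
          case False then show ?thesis using vuu[OF False] unfolding unitvec_def by auto
        qed
      qed
      also have "\<dots> = c (v p)" using p by (simp add: sum.delta)
      finally show ?thesis using H2[of p] by simp
    qed
    show "\<forall>b\<in>v ` {1..n}. c b = 0"
    proof
      fix b assume "b \<in> v ` {1..n}"
      then obtain p where p: "p \<in> {1..n}" "b = v p" by blast
      show "c b = 0"
      proof (cases "p \<le> i")
        case True then show ?thesis using z1[of p] p by auto
      next
        case False then show ?thesis using z2[of p] p by auto
      qed
    qed
  qed
  show ?thesis
    apply (rule exI[of _ "v ` {1..n}"])
    using vin li card_image[OF inj] by auto
qed

lemma vdim_eq:
  assumes i1: "1 \<le> i" and i2: "i + 2 \<le> n"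
  shows "vdim (pos_cone (expset n i)) = n"
  unfolding vdim_def
proof (rule cSup_eq_maximum)
  show "n \<in> {card B |B. finite B \<and> B \<subseteq> pos_cone (expset n i) \<and> lin_indep B}"
    using lower_B[OF assms] by auto
  show "\<And>x. x \<in> {card B |B. finite B \<and> B \<subseteq> pos_cone (expset n i) \<and> lin_indep B} \<Longrightarrow> x \<le> n"
    using indep_card cone_ambient by blast
qed

lemma dot_unit_r: "k \<in> {1..n} \<Longrightarrow> (\<Sum>m=1..n. w m * unitvec k m) = w k"
proof -
  assume k: "k \<in> {1..n}"
  have "(\<Sum>m=1..n. w m * unitvec k m) = (\<Sum>m=1..n. if m = k then w k else 0)"
    unfolding unitvec_def by (intro sum.cong refl) auto
  also have "\<dots> = w k" using k by (simp add: sum.delta)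
  finally show ?thesis .
qed

lemma dot_unit_l: "k \<in> {1..n} \<Longrightarrow> (\<Sum>m=1..n. unitvec k m * w m) = w k"
  using dot_unit_r[of k n w] by (simp add: mult.commute)

lemma in_half_unit: "p \<in> ambient n \<Longrightarrow> k \<in> {1..n} \<Longrightarrow> p k \<ge> 0 \<Longrightarrow> p \<in> halfspace n (unitvec k)"
  unfolding halfspace_def using dot_unit_l[of k n p] by simp

lemma unit_amb: "k \<in> {1..n} \<Longrightarrow> unitvec k \<in> ambient n"
  unfolding ambient_def unitvec_def by auto

lemma main_eq:
  assumes i1: "1 \<le> i" and i2: "i + 2 \<le> n"
  shows "pos_cone (expset n i) = ambient n \<inter> (\<Inter>a\<in>normals n i. halfspace n a)"
proof
  show "pos_cone (expset n i) \<subseteq> ambient n \<inter> (\<Inter>a\<in>normals n i. halfspace n a)"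
  proof
    fix x assume x: "x \<in> pos_cone (expset n i)"
    have "x \<in> halfspace n (unitvec k)" for k using pc_halfspace[OF expset_unit[of n i k]] x by blast
    moreover have "x \<in> halfspace n (nu n i)" using pc_halfspace[OF expset_nu[of i n]] x i2 by auto
    moreover have "x \<in> ambient n" using cone_ambient x by blast
    ultimately show "x \<in> ambient n \<inter> (\<Inter>a\<in>normals n i. halfspace n a)"
      unfolding normals_def by blast
  qed
  show "ambient n \<inter> (\<Inter>a\<in>normals n i. halfspace n a) \<subseteq> pos_cone (expset n i)"
  proof
    fix x assume x: "x \<in> ambient n \<inter> (\<Inter>a\<in>normals n i. halfspace n a)"
    have amb: "x \<in> ambient n" using x by blast
    have pos: "\<forall>k\<in>{1..n}. x k \<ge> 0"
    proof
      fix k assume k: "k \<in> {1..n}"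
      then have "x \<in> halfspace n (unitvec k)" using x unfolding normals_def by blast
      then show "x k \<ge> 0" unfolding halfspace_def using dot_unit_l[OF k] by simp
    qed
    have "x \<in> halfspace n (nu n i)" using x unfolding normals_def by blast
    then have nuin: "(\<Sum>k=1..n. nu n i k * x k) \<ge> 0" unfolding halfspace_def by simp
    show "x \<in> pos_cone (expset n i)" by (rule rev_incl[OF i1 i2 amb pos nuin])
  qed
qed

lemma irred:
  assumes i1: "1 \<le> i" and i2: "i + 2 \<le> n" and a: "a \<in> normals n i"
  shows "ambient n \<inter> (\<Inter>b\<in>normals n i - {a}. halfspace n b) \<noteq> pos_cone (expset n i)"
proof -
  have "\<exists>p. p \<in> ambient n \<and> (\<forall>b\<in>normals n i - {a}. p \<in> halfspace n b) \<and> p \<notin> halfspace n a"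
  proof (cases "a = nu n i")
    case True
    define p where "p = unitvec 1"
    have k1: "(1::nat) \<in> {1..n}" using i2 by simp
    have pa: "p \<in> ambient n" unfolding p_def using unit_amb[OF k1] .
    have "(\<Sum>m=1..n. nu n i m * p m) = nu n i 1" unfolding p_def by (rule dot_unit_r[OF k1])
    also have "\<dots> < 0" using i1 i2 unfolding nu_def by simp
    finally have "p \<notin> halfspace n a" unfolding True halfspace_def by simp
    moreover have "\<forall>b\<in>normals n i - {a}. p \<in> halfspace n b"
    proof
      fix b assume "b \<in> normals n i - {a}"
      then obtain k where k: "k \<in> {1..n}" "b = unitvec k" using True unfolding normals_def by auto
      show "p \<in> halfspace n b" unfolding k(2)
        by (rule in_half_unit[OF pa k(1)]) (simp add: p_def unitvec_def)
    qed
    ultimately show ?thesis using pa by blast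
  next
    case False
    then obtain k where k: "k \<in> {1..n}" "a = unitvec k" using a unfolding normals_def by auto
    show ?thesis
    proof (cases "k \<le> i")
      case True
      define p where "p = (\<lambda>m. - unitvec k m)"
      have pa: "p \<in> ambient n" using unit_amb[OF k(1)] unfolding p_def ambient_def by simp
      have "(\<Sum>m=1..n. unitvec k m * p m) = - 1" unfolding p_def using dot_unit_l[OF k(1), of "\<lambda>m. - unitvec k m"]
        by (simp add: unitvec_def)
      then have "p \<notin> halfspace n a" unfolding k(2) halfspace_def by simp
      moreover have "\<forall>b\<in>normals n i - {a}. p \<in> halfspace n b"
      proof
        fix b assume b: "b \<in> normals n i - {a}"
        show "p \<in> halfspace n b"
        proof (cases "b = nu n i")
          case True
          have "(\<Sum>m=1..n. nu n i m * p m) = - nu n i k"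
            unfolding p_def using dot_unit_r[OF k(1), of "nu n i"] by (simp add: sum_negf)
          also have "\<dots> \<ge> 0" using True k \<open>k \<le> i\<close> i2 unfolding nu_def by simp
          finally show ?thesis using pa unfolding True halfspace_def by simp
        next
          case False
          then obtain k' where k': "k' \<in> {1..n}" "b = unitvec k'" using b unfolding normals_def by auto
          then have "k' \<noteq> k" using b k by auto
          then show ?thesis unfolding k'(2)
            by (intro in_half_unit[OF pa k'(1)]) (simp add: p_def unitvec_def)
        qed
      qed
      ultimately show ?thesis using pa by blast
    next
      case kF: False
      define m0 where "m0 = (if k = n then n - 1 else n)"
      have m0: "m0 \<in> {1..n}" "m0 \<noteq> k" "\<not> m0 \<le> i" using k kF i2 unfolding m0_def by auto
      define p where "p = (\<lambda>m. unitvec m0 m - unitvec k m)"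
      have pa: "p \<in> ambient n" using unit_amb[OF k(1)] unit_amb[OF m0(1)] unfolding p_def ambient_def by simp
      have dotp: "(\<Sum>m=1..n. w m * p m) = w m0 - w k" for w
        unfolding p_def right_diff_distrib sum_subtractf dot_unit_r[OF k(1)] dot_unit_r[OF m0(1)] ..
      have "(\<Sum>m=1..n. unitvec k m * p m) = - 1" unfolding dotp using m0(2) by (simp add: unitvec_def)
      then have "p \<notin> halfspace n a" unfolding k(2) halfspace_def by simp
      moreover have "\<forall>b\<in>normals n i - {a}. p \<in> halfspace n b"
      proof
        fix b assume b: "b \<in> normals n i - {a}"
        show "p \<in> halfspace n b"
        proof (cases "b = nu n i")
          case True
          have "(\<Sum>m=1..n. nu n i m * p m) = 0"
            unfolding dotp using m0 k kF unfolding nu_def by auto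
          then show ?thesis using pa unfolding True halfspace_def by simp
        next
          case False
          then obtain k' where k': "k' \<in> {1..n}" "b = unitvec k'" using b unfolding normals_def by auto
          then have "k' \<noteq> k" using b k by auto
          then show ?thesis unfolding k'(2)
            by (intro in_half_unit[OF pa k'(1)]) (simp add: p_def unitvec_def)
        qed
      qed
      ultimately show ?thesis using pa by blast
    qed
  qed
  then obtain p where p: "p \<in> ambient n" "\<forall>b\<in>normals n i - {a}. p \<in> halfspace n b" "p \<notin> halfspace n a"
    by blast
  have "p \<notin> pos_cone (expset n i)" using main_eq[OF i1 i2] a p(3) by blast
  moreover have "p \<in> ambient n \<inter> (\<Inter>b\<in>normals n i - {a}. halfspace n b)" using p by blast
  ultimately show ?thesis by blast
qed

theorem lemma4p1:
  fixes n i :: nat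
  assumes "n \<ge> 3" and "1 \<le> i" and "i \<le> n - 2"
  shows "vdim (pos_cone (expset n i)) = n
       \<and> pos_cone (expset n i) = ambient n \<inter> (\<Inter>a\<in>normals n i. halfspace n a)
       \<and> (\<forall>a\<in>normals n i.
            ambient n \<inter> (\<Inter>b\<in>normals n i - {a}. halfspace n b) \<noteq> pos_cone (expset n i))"
proof -
  have i2: "i + 2 \<le> n" using assms by simp
  show ?thesis using vdim_eq[OF assms(2) i2] main_eq[OF assms(2) i2] irred[OF assms(2) i2] by blast
qed

end
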